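(* Let $T>0$ and let $S:[0,1]\to\mathbb{R}$ be continuous and concave. Define the successor function $\lambda:\mathbb{R}\to\mathbb{R}$ by $\lambda(x)=\min_{p\in[0,1]}\big(px-T\,S(p)\big)$, and the operation $x\oplus_S y=\min_{p\in[0,1]}\big(px+(1-p)y-T\,S(p)\big)=\lambda(x-y)+y$ on $\mathbb{R}$. Then: (1) $S(p)=S(1-p)$ for all $p\in[0,1]$ if and only if $\lambda(x)-\lambda(-x)=x$ for all $x\in\mathbb{R}$; (2) $S(0)=0$ if and only if $\lambda(x)\le 0$ for all $x$ and $\lim_{x\to+\infty}\lambda(x)=0$; (3) $S(1)=0$ if and only if $\lambda(x)\le x$ for all $x$ and $\lim_{x\to-\infty}(\lambda(x)-x)=0$; (4) $S$ satisfies the associativity condition — for all $p_1,p_2\ge 0$ with $p_1+p_2\le1$, $p_1<1$, $p_1+p_2>0$: $S(p_1)+(1-p_1)S\big(\frac{p_2}{1-p_1}\big)=S(p_1+p_2)+(p_1+p_2)S\big(\frac{p_1}{p_1+p_2}\big)$ — making $\oplus_S$ associative on $\mathbb{R}$, if and only if $\lambda(x-\lambda(y))+\lambda(y)=\lambda(\lambda(x-y)+y)$ for all $x,y\in\mathbb{R}$.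
   Context: The operation $\oplus_S$ is the "thermodynamic semiring" addition on $\mathbb{R}$ (min-plus convention) associated with the entropy function $S$ at temperature $T$. *)

theory Defs
  imports "HOL-Analysis.Analysis"
begin

text \<open>Successor function: lambda(x) = min over p in [0,1] of (p x - T S(p)).
  The minimum exists for continuous S; we write it as the infimum of the image.\<close>
definition succ_fun :: "real \<Rightarrow> (real \<Rightarrow> real) \<Rightarrow> real \<Rightarrow> real" where
  "succ_fun T S x = Inf ((\<lambda>p. p * x - T * S p) ` {0..1})"

definition thermo_add :: "real \<Rightarrow> (real \<Rightarrow> real) \<Rightarrow> real \<Rightarrow> real \<Rightarrow> real" where
  "thermo_add T S x y = Inf ((\<lambda>p. p * x + (1 - p) * y - T * S p) ` {0..1})"

definition assoc_cond :: "(real \<Rightarrow> real) \<Rightarrow> bool" where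
  "assoc_cond S \<longleftrightarrow> (\<forall>p1 p2. p1 \<ge> 0 \<and> p2 \<ge> 0 \<and> p1 + p2 \<le> 1 \<and> p1 < 1 \<and> p1 + p2 > 0 \<longrightarrow>
      S p1 + (1 - p1) * S (p2 / (1 - p1)) = S (p1 + p2) + (p1 + p2) * S (p1 / (p1 + p2)))"

end

theory Submission
  imports Defs
begin

lemma inf_attain:
  fixes g :: "real \<Rightarrow> real"
  assumes "continuous_on {0..1} g"
  shows "\<exists>p\<in>{0..1}. Inf (g ` {0..1}) = g p" and "\<And>p. p\<in>{0..1} \<Longrightarrow> Inf (g ` {0..1}) \<le> g p"
proof -
  obtain p where p: "p\<in>{0..1}" "\<forall>y\<in>{0..1}. g p \<le> g y"
    using continuous_attains_inf[OF compact_Icc _ assms] by auto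
  then have e: "Inf (g ` {0..1}) = g p" by (intro cInf_eq_minimum) auto
  show "\<exists>p\<in>{0..1}. Inf (g ` {0..1}) = g p" using p e by blast
  fix q :: real assume "q\<in>{0..1}" then show "Inf (g ` {0..1}) \<le> g q" using p e by auto
qed

context
  fixes T :: real and S :: "real \<Rightarrow> real"
  assumes T_pos: "T > 0" and cont: "continuous_on {0..1} S" and conc: "concave_on {0..1} S"
begin

lemma lam_le: "p \<in> {0..1} \<Longrightarrow> succ_fun T S x \<le> p*x - T * S p"
  unfolding succ_fun_def
  by (rule inf_attain(2)) (auto intro!: continuous_intros cont)

lemma lam_att: "\<exists>p\<in>{0..1}. succ_fun T S x = p*x - T * S p"
  unfolding succ_fun_def
  by (rule inf_attain(1)) (auto intro!: continuous_intros cont)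

lemma thermo: "thermo_add T S x y = succ_fun T S (x - y) + y"
proof -
  obtain p where p: "p\<in>{0..1}" "succ_fun T S (x-y) = p*(x-y) - T * S p" using lam_att by blast
  show ?thesis unfolding thermo_add_def
  proof (rule cInf_eq_minimum)
    show "succ_fun T S (x - y) + y \<in> (\<lambda>p. p * x + (1 - p) * y - T * S p) ` {0..1}"
      using p by (intro image_eqI[of _ _ p]) (auto simp: algebra_simps)
  next
    fix z assume "z \<in> (\<lambda>p. p * x + (1 - p) * y - T * S p) ` {0..1}"
    then obtain q where q: "q\<in>{0..1}" "z = q * x + (1 - q) * y - T * S q" by auto
    have "succ_fun T S (x-y) \<le> q*(x-y) - T * S q" using lam_le[OF q(1)] .
    then show "succ_fun T S (x - y) + y \<le> z" using q by (simp add: algebra_simps)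
  qed
qed

lemma conc3:
  assumes "a \<in> {0..1}" "b \<in> {0..1}" "a \<le> c" "c \<le> b" "a < b"
  shows "(b - a) * S c \<ge> (b - c) * S a + (c - a) * S b"
proof -
  define t where "t = (c - a) / (b - a)"
  have t0: "t \<ge> 0" "t \<le> 1" using assms by (auto simp: t_def divide_simps)
  have "S ((1 - t) *\<^sub>R a + t *\<^sub>R b) \<ge> (1 - t) * S a + t * S b"
    using concave_onD[OF conc t0 assms(1,2)] .
  moreover have "(1 - t) *\<^sub>R a + t *\<^sub>R b = a + t * (b - a)"
    by (simp add: algebra_simps)
  moreover have tb: "t * (b - a) = c - a" using assms by (simp add: t_def)
  ultimately have "S c \<ge> (1 - t) * S a + t * S b" by simp
  then have "(b - a) * S c \<ge> (b - a) * ((1 - t) * S a + t * S b)"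
    using assms by (intro mult_left_mono) auto
  also have "(b - a) * ((1 - t) * S a + t * S b) = (b-a)*S a - (t*(b-a))*S a + (t*(b-a))*S b"
    by (simp add: algebra_simps)
  also have "\<dots> = (b - c) * S a + (c - a) * S b" unfolding tb by (simp add: algebra_simps)
  finally show ?thesis .
qed

lemma supp:
  assumes p: "p \<in> {0..1}" and d: "\<delta> > 0"
  shows "\<exists>m. \<forall>q\<in>{0..1}. S q \<le> S p + \<delta> + m*(q-p)"
proof (cases "p = 0")
  case True
  obtain z where z: "z\<in>{0..1}" "\<forall>y\<in>{0..1}. S y \<le> S z"
    using continuous_attains_sup[OF compact_Icc _ cont] by auto
  define M where "M = S z"
  have M: "\<forall>q\<in>{0..1}. S q \<le> M" using z by (simp add: M_def)
  obtain \<eta> where eta: "\<eta> > 0" "\<forall>q\<in>{0..1}. dist q 0 < \<eta> \<longrightarrow> dist (S q) (S 0) < \<delta>"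
    using cont d unfolding continuous_on_iff by force
  define m where "m = max 0 ((M - S 0)/\<eta>)"
  have "S q \<le> S p + \<delta> + m*(q-p)" if q: "q \<in> {0..1}" for q
  proof (cases "q < \<eta>")
    case True
    then have "\<bar>S q - S 0\<bar> < \<delta>" using eta q by (auto simp: dist_real_def)
    moreover have "m * q \<ge> 0" using q by (simp add: m_def)
    ultimately show ?thesis using \<open>p = 0\<close> by auto
  next
    case False
    have "M - S 0 = (M - S 0)/\<eta> * \<eta>" using eta by simp
    also have "\<dots> \<le> m * \<eta>" using eta by (intro mult_right_mono) (auto simp: m_def)
    also have "\<dots> \<le> m * q" using False by (intro mult_left_mono) (auto simp: m_def)
    finally have "M - S 0 \<le> m * q" .
    moreover have "S q \<le> M" using M q by auto
    ultimately show ?thesis using d \<open>p = 0\<close> by auto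
  qed
  then show ?thesis by blast
next
  case False
  then have p0: "p > 0" using p by auto
  define K where "K = (S p - S 0)/p"
  obtain \<eta> where eta: "\<eta> > 0" "\<forall>q\<in>{0..1}. dist q p < \<eta> \<longrightarrow> dist (S q) (S p) < \<delta>/2"
    using cont d p unfolding continuous_on_iff by (meson half_gt_zero)
  define h where "h = min p (min (\<eta>/2) (\<delta>/(2*(\<bar>K\<bar>+1))))"
  have h0: "h > 0" using p0 eta d by (auto simp: h_def)
  have hp: "h \<le> p" "h \<le> \<eta>/2" "h \<le> \<delta>/(2*(\<bar>K\<bar>+1))" unfolding h_def by linarith+
  define m where "m = (S p - S (p - h))/h"
  have mh: "m * h = S p - S (p - h)" using h0 by (simp add: m_def)
  have ph01: "p - h \<in> {0..1}" using hp p h0 by auto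
  have A: "S q \<le> S p + m*(q-p)" if q: "q \<in> {0..1}" "q \<le> p - h" for q
  proof -
    have "(p - q) * S (p - h) \<ge> (p - (p - h)) * S q + (p - h - q) * S p"
      using conc3[of q p "p - h"] q p h0 by auto
    then have "h * (S q - S p) \<le> (p - q) * (S (p - h) - S p)"
      by (simp add: algebra_simps)
    also have "\<dots> = (p - q) * (- (m * h))" using mh by simp
    also have "\<dots> = h * (m * (q - p))" by (simp add: algebra_simps)
    finally have "h * (S q - S p) \<le> h * (m * (q - p))" .
    then have "S q - S p \<le> m * (q - p)" using h0 by simp
    then show ?thesis by simp
  qed
  have B: "S q \<le> S p + m*(q-p)" if q: "q \<in> {0..1}" "q \<ge> p" for q
  proof (cases "q = p")
    case True then show ?thesis by simp
  next
    case False
    have "(q - (p - h)) * S p \<ge> (q - p) * S (p - h) + (p - (p - h)) * S q"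
      using conc3[of "p - h" q p] q p h0 ph01 False by auto
    then have "h * (S q - S p) \<le> (q - p) * (S p - S (p - h))"
      by (simp add: algebra_simps)
    also have "\<dots> = (q - p) * (m * h)" using mh by simp
    also have "\<dots> = h * (m * (q - p))" by (simp add: algebra_simps)
    finally have "h * (S q - S p) \<le> h * (m * (q - p))" .
    then have "S q - S p \<le> m * (q - p)" using h0 by simp
    then show ?thesis by simp
  qed
  have "S 0 \<le> S p + m*(0-p)" using A[of 0] hp by auto
  then have "m * p \<le> S p - S 0" by simp
  then have mK: "m \<le> K" using p0 by (simp add: K_def field_simps)
  have "S q \<le> S p + \<delta> + m*(q-p)" if q: "q \<in> {0..1}" for q
  proof (cases "q \<le> p - h")
    case True then show ?thesis using A[OF q] d by auto
  next
    case nle: False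
    show ?thesis
    proof (cases "q \<ge> p")
      case True then show ?thesis using B[OF q] d by auto
    next
      case False
      have "dist q p < \<eta>" using nle False hp eta by (auto simp: dist_real_def)
      then have "dist (S q) (S p) < \<delta>/2" using eta q by auto
      then have c1: "S q < S p + \<delta>/2" unfolding dist_real_def by linarith
      have "m * (q - p) \<ge> - (\<delta>/2)"
      proof (cases "m \<le> 0")
        case True
        have "m * (q - p) \<ge> 0" using True False by (intro mult_nonpos_nonpos) auto
        then show ?thesis using d by linarith
      next
        case mpos: False
        have "m * (p - q) \<le> m * h" using nle mpos by (intro mult_left_mono) auto
        also have "\<dots> \<le> (\<bar>K\<bar>+1) * h" using mK mpos h0 by (intro mult_right_mono) auto
        also have "\<dots> \<le> (\<bar>K\<bar>+1) * (\<delta>/(2*(\<bar>K\<bar>+1)))" using hp by (intro mult_left_mono) auto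
        also have "\<dots> = \<delta>/2" by (simp add: field_simps)
        finally show ?thesis by (simp add: algebra_simps)
      qed
      then show ?thesis using c1 by simp
    qed
  qed
  then show ?thesis by blast
qed

lemma approx:
  assumes p: "p \<in> {0..1}" and e: "\<epsilon> > 0"
  shows "\<exists>x. succ_fun T S x - p*x > - T * S p - \<epsilon>"
proof -
  obtain m where m: "\<forall>q\<in>{0..1}. S q \<le> S p + \<epsilon>/(2*T) + m*(q-p)"
    using supp[OF p, of "\<epsilon>/(2*T)"] e T_pos by auto
  obtain q where q: "q\<in>{0..1}" "succ_fun T S (T*m) = q*(T*m) - T * S q" using lam_att by blast
  have "T * S q \<le> T * (S p + \<epsilon>/(2*T) + m*(q-p))"
    using m q T_pos by (intro mult_left_mono) auto
  also have "\<dots> = T * S p + \<epsilon>/2 + (T*m)*(q-p)" using T_pos by (simp add: field_simps)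
  finally have "T * S q \<le> T * S p + \<epsilon>/2 + (T*m)*(q-p)" .
  then have "succ_fun T S (T*m) - p*(T*m) > - T * S p - \<epsilon>" using q e
    by (simp add: algebra_simps)
  then show ?thesis by blast
qed

lemma lam_mono: "x \<le> y \<Longrightarrow> succ_fun T S x \<le> succ_fun T S y"
proof -
  assume xy: "x \<le> y"
  obtain p where p: "p\<in>{0..1}" "succ_fun T S y = p*y - T * S p" using lam_att by blast
  have "succ_fun T S x \<le> p*x - T*S p" using lam_le[OF p(1)] .
  also have "\<dots> \<le> p*y - T*S p" using p xy by (auto intro: mult_left_mono)
  finally show ?thesis using p by simp
qed

lemma lam_anti: "x \<le> y \<Longrightarrow> succ_fun T S y - y \<le> succ_fun T S x - x"
proof -
  assume xy: "x \<le> y"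
  obtain p where p: "p\<in>{0..1}" "succ_fun T S x = p*x - T * S p" using lam_att by blast
  have "succ_fun T S y \<le> p*y - T*S p" using lam_le[OF p(1)] .
  moreover have "(1 - p) * x \<le> (1 - p) * y" using p xy by (auto intro: mult_left_mono)
  ultimately show ?thesis using p by (simp add: algebra_simps)
qed

lemma lim_top: "(succ_fun T S \<longlongrightarrow> - T * S 0) at_top"
proof (rule order_tendstoI)
  fix a assume "a < - T * S 0"
  then obtain x0 where "succ_fun T S x0 - 0*x0 > - T * S 0 - (- T * S 0 - a)"
    using approx[of 0 "- T * S 0 - a"] by auto
  then have x0: "succ_fun T S x0 > a" by simp
  show "\<forall>\<^sub>F x in at_top. a < succ_fun T S x"
    using eventually_ge_at_top[of x0] by eventually_elim (use x0 lam_mono in force)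
next
  fix a assume "a > - T * S 0"
  have "succ_fun T S x \<le> - T * S 0" for x using lam_le[of 0 x] by simp
  then have "\<forall>x. succ_fun T S x < a" using \<open>a > _\<close> by (auto intro: le_less_trans)
  then show "\<forall>\<^sub>F x in at_top. succ_fun T S x < a" by simp
qed

lemma lim_bot: "((\<lambda>x. succ_fun T S x - x) \<longlongrightarrow> - T * S 1) at_bot"
proof (rule order_tendstoI)
  fix a assume "a < - T * S 1"
  then obtain x0 where "succ_fun T S x0 - 1*x0 > - T * S 1 - (- T * S 1 - a)"
    using approx[of 1 "- T * S 1 - a"] by auto
  then have x0: "succ_fun T S x0 - x0 > a" by simp
  show "\<forall>\<^sub>F x in at_bot. a < succ_fun T S x - x"
    using eventually_le_at_bot[of x0] by eventually_elim (use x0 lam_anti in force)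
next
  fix a assume "a > - T * S 1"
  have "succ_fun T S x - x \<le> - T * S 1" for x using lam_le[of 1 x] by simp
  then have "\<forall>x. succ_fun T S x - x < a" using \<open>a > _\<close> by (auto intro: le_less_trans)
  then show "\<forall>\<^sub>F x in at_bot. succ_fun T S x - x < a" by simp
qed

lemma up1:
  assumes q: "q \<in> {0..1}" and p: "p \<in> {0..1}"
  shows "succ_fun T S (succ_fun T S (x - y) + y) \<le> (q*p)*x + (q*(1-p))*y - T*(S q + q*S p)"
proof -
  have "succ_fun T S (succ_fun T S (x - y) + y) \<le> q*(succ_fun T S (x - y) + y) - T*S q"
    using lam_le[OF q] .
  moreover have "q * succ_fun T S (x - y) \<le> q * (p*(x-y) - T*S p)"
    using lam_le[OF p] q by (intro mult_left_mono) auto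
  ultimately show ?thesis by (simp add: algebra_simps)
qed

lemma up2:
  assumes a: "a \<in> {0..1}" and s: "r \<in> {0..1}"
  shows "succ_fun T S (x - succ_fun T S y) + succ_fun T S y \<le> a*x + ((1-a)*r)*y - T*(S a + (1-a)*S r)"
proof -
  have "succ_fun T S (x - succ_fun T S y) \<le> a*(x - succ_fun T S y) - T*S a"
    using lam_le[OF a] .
  moreover have "(1-a) * succ_fun T S y \<le> (1-a) * (r*y - T*S r)"
    using lam_le[OF s] a by (intro mult_left_mono) auto
  ultimately show ?thesis by (simp add: algebra_simps)
qed

lemma ap1:
  assumes q: "q \<in> {0..1}" and p: "p \<in> {0..1}" and e: "\<epsilon> > 0"
  shows "\<exists>x y. succ_fun T S (succ_fun T S (x - y) + y) > (q*p)*x + (q*(1-p))*y - T*(S q + q*S p) - \<epsilon>"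
proof -
  obtain u where u: "succ_fun T S u - p*u > - T*S p - \<epsilon>/2" using approx[OF p, of "\<epsilon>/2"] e by auto
  obtain w where w: "succ_fun T S w - q*w > - T*S q - \<epsilon>/2" using approx[OF q, of "\<epsilon>/2"] e by auto
  define y where "y = w - succ_fun T S u"
  define x where "x = u + y"
  have xy: "x - y = u" "succ_fun T S u + y = w" by (auto simp: x_def y_def)
  have h1: "q * succ_fun T S u \<ge> q * (p*u - T*S p - \<epsilon>/2)" using u q by (intro mult_left_mono) auto
  have h2: "q * (\<epsilon>/2) \<le> 1 * (\<epsilon>/2)" using q e by (intro mult_right_mono) auto
  have h3: "q * (p*u - T*S p - \<epsilon>/2) = q*(p*u) - q*(T*S p) - q*(\<epsilon>/2)" by (simp add: algebra_simps)
  have h4: "(q*p)*x + (q*(1-p))*y = q*(p*u) + q*y" by (simp add: x_def algebra_simps)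
  have h5: "q*w = q*y + q* succ_fun T S u" by (simp add: y_def algebra_simps)
  have h6: "T*(S q + q*S p) = T * S q + q*(T*S p)" by (simp add: algebra_simps)
  have "succ_fun T S (succ_fun T S (x - y) + y) = succ_fun T S w" using xy by simp
  then have "succ_fun T S (succ_fun T S (x - y) + y) > (q*p)*x + (q*(1-p))*y - T*(S q + q*S p) - \<epsilon>"
    using w h1 h2 h3 h4 h5 h6 by linarith
  then show ?thesis by blast
qed

lemma ap2:
  assumes a: "a \<in> {0..1}" and s: "r \<in> {0..1}" and e: "\<epsilon> > 0"
  shows "\<exists>x y. succ_fun T S (x - succ_fun T S y) + succ_fun T S y > a*x + ((1-a)*r)*y - T*(S a + (1-a)*S r) - \<epsilon>"
proof -
  obtain y where y: "succ_fun T S y - r*y > - T*S r - \<epsilon>/2" using approx[OF s, of "\<epsilon>/2"] e by auto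
  obtain u where u: "succ_fun T S u - a*u > - T*S a - \<epsilon>/2" using approx[OF a, of "\<epsilon>/2"] e by auto
  define x where "x = u + succ_fun T S y"
  have xu: "x - succ_fun T S y = u" by (simp add: x_def)
  have h1: "(1-a) * succ_fun T S y \<ge> (1-a) * (r*y - T*S r - \<epsilon>/2)" using y a by (intro mult_left_mono) auto
  have h2: "(1-a) * (\<epsilon>/2) \<le> 1 * (\<epsilon>/2)" using a e by (intro mult_right_mono) auto
  have h3: "(1-a) * (r*y - T*S r - \<epsilon>/2) = ((1-a)*r)*y - (1-a)*(T*S r) - (1-a)*(\<epsilon>/2)" by (simp add: algebra_simps)
  have h4: "a*u = a*x - a* succ_fun T S y" by (simp add: x_def algebra_simps)
  have h5: "T*(S a + (1-a)*S r) = T*S a + (1-a)*(T*S r)" by (simp add: algebra_simps)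
  have h6: "(1-a) * succ_fun T S y = succ_fun T S y - a * succ_fun T S y" by (simp add: algebra_simps)
  have h7: "succ_fun T S (x - succ_fun T S y) = succ_fun T S u" using xu by simp
  have "succ_fun T S (x - succ_fun T S y) + succ_fun T S y > a*x + ((1-a)*r)*y - T*(S a + (1-a)*S r) - \<epsilon>"
    using u h1 h2 h4 h6 h7 by (simp add: field_simps)
  then show ?thesis by blast
qed

lemma part1: "(\<forall>p\<in>{0..1}. S p = S (1 - p)) \<longleftrightarrow> (\<forall>x. succ_fun T S x - succ_fun T S (- x) = x)"
proof
  assume H: "\<forall>p\<in>{0..1}. S p = S (1 - p)"
  show "\<forall>x. succ_fun T S x - succ_fun T S (- x) = x"
  proof
    fix x
    obtain q where q: "q\<in>{0..1}" "succ_fun T S x = q*x - T * S q" using lam_att by blast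
    have q1: "1 - q \<in> {0..1}" using q by auto
    have "succ_fun T S (-x) \<le> (1-q)*(-x) - T*S (1-q)" using lam_le[OF q1] .
    moreover have "S (1-q) = S q" using H[rule_format, OF q(1)] by simp
    ultimately have i1: "succ_fun T S (-x) \<le> succ_fun T S x - x" using q by (simp add: algebra_simps)
    obtain p where p: "p\<in>{0..1}" "succ_fun T S (-x) = p*(-x) - T * S p" using lam_att by blast
    have p1: "1 - p \<in> {0..1}" using p by auto
    have "succ_fun T S x \<le> (1-p)*x - T*S (1-p)" using lam_le[OF p1] .
    moreover have "S (1-p) = S p" using H[rule_format, OF p(1)] by simp
    ultimately have "succ_fun T S x \<le> succ_fun T S (-x) + x" using p by (simp add: algebra_simps)
    with i1 show "succ_fun T S x - succ_fun T S (- x) = x" by simp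
  qed
next
  assume H: "\<forall>x. succ_fun T S x - succ_fun T S (- x) = x"
  have K: "S (1 - r) \<le> S r" if r: "r \<in> {0..1}" for r
  proof (rule ccontr)
    assume "\<not> ?thesis"
    then have e: "T * (S (1-r) - S r) > 0" using T_pos by simp
    obtain x where x: "succ_fun T S x - r*x > - T * S r - T * (S (1-r) - S r)"
      using approx[OF r e] by blast
    have r1: "1 - r \<in> {0..1}" using r by auto
    have "succ_fun T S (-x) \<le> (1-r)*(-x) - T*S (1-r)" using lam_le[OF r1] .
    moreover have "succ_fun T S x = succ_fun T S (-x) + x" using H[rule_format, of x] by simp
    ultimately show False using x by (simp add: algebra_simps)
  qed
  show "\<forall>p\<in>{0..1}. S p = S (1 - p)"
  proof
    fix p :: real assume p: "p \<in> {0..1}"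
    have "S (1 - p) \<le> S p" using K[OF p] .
    moreover have "S (1 - (1 - p)) \<le> S (1 - p)" using p by (intro K) auto
    ultimately show "S p = S (1 - p)" by simp
  qed
qed

lemma part2: "S 0 = 0 \<longleftrightarrow> (\<forall>x. succ_fun T S x \<le> 0) \<and> (succ_fun T S \<longlongrightarrow> 0) at_top"
proof
  assume "S 0 = 0"
  then show "(\<forall>x. succ_fun T S x \<le> 0) \<and> (succ_fun T S \<longlongrightarrow> 0) at_top"
    using lam_le[of 0] lim_top by auto
next
  assume "(\<forall>x. succ_fun T S x \<le> 0) \<and> (succ_fun T S \<longlongrightarrow> 0) at_top"
  then have "(succ_fun T S \<longlongrightarrow> 0) at_top" by simp
  then have "- T * S 0 = 0" using tendsto_unique[OF trivial_limit_at_top_linorder lim_top] by blast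
  then show "S 0 = 0" using T_pos by simp
qed

lemma part3: "S 1 = 0 \<longleftrightarrow> (\<forall>x. succ_fun T S x \<le> x) \<and> ((\<lambda>x. succ_fun T S x - x) \<longlongrightarrow> 0) at_bot"
proof
  assume "S 1 = 0"
  then show "(\<forall>x. succ_fun T S x \<le> x) \<and> ((\<lambda>x. succ_fun T S x - x) \<longlongrightarrow> 0) at_bot"
    using lam_le[of 1] lim_bot by auto
next
  assume "(\<forall>x. succ_fun T S x \<le> x) \<and> ((\<lambda>x. succ_fun T S x - x) \<longlongrightarrow> 0) at_bot"
  then have "((\<lambda>x. succ_fun T S x - x) \<longlongrightarrow> 0) at_bot" by simp
  then have "- T * S 1 = 0" using tendsto_unique[OF trivial_limit_at_bot_linorder lim_bot] by blast
  then show "S 1 = 0" using T_pos by simp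
qed

lemma assocD:
  assumes A: "assoc_cond S" and "p1 \<ge> 0" "p2 \<ge> 0" "p1 + p2 \<le> 1" "p1 < 1" "p1 + p2 > 0"
  shows "S p1 + (1 - p1) * S (p2 / (1 - p1)) = S (p1 + p2) + (p1 + p2) * S (p1 / (p1 + p2))"
  using assms unfolding assoc_cond_def by blast

lemma assoc_zero:
  assumes A: "assoc_cond S"
  shows "S 0 = 0" "S 1 = 0"
proof -
  have Ax: "\<And>p1 p2. p1 \<ge> 0 \<Longrightarrow> p2 \<ge> 0 \<Longrightarrow> p1 + p2 \<le> 1 \<Longrightarrow> p1 < 1 \<Longrightarrow> p1 + p2 > 0 \<Longrightarrow>
      S p1 + (1 - p1) * S (p2 / (1 - p1)) = S (p1 + p2) + (p1 + p2) * S (p1 / (p1 + p2))"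
    using A unfolding assoc_cond_def by blast
  have e1: "S (1/2) + (1 - 1/2) * S (0 / (1 - 1/2)) = S (1/2 + 0) + (1/2 + 0) * S ((1/2) / (1/2 + 0))"
    by (rule Ax) auto
  have e2: "S (1/3) + (1 - 1/3) * S (0 / (1 - 1/3)) = S (1/3 + 0) + (1/3 + 0) * S ((1/3) / (1/3 + 0))"
    by (rule Ax) auto
  from e1 e2 show "S 0 = 0" "S 1 = 0" by simp_all
qed

lemma eps_le: "(\<And>\<epsilon>. \<epsilon> > 0 \<Longrightarrow> (A::real) - \<epsilon> < B) \<Longrightarrow> A \<le> B"
proof (rule ccontr)
  assume H: "\<And>\<epsilon>. \<epsilon> > 0 \<Longrightarrow> (A::real) - \<epsilon> < B" and "\<not> A \<le> B"
  then have "A - (A - B) < B" using H[of "A - B"] by simp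
  then show False by simp
qed

lemma part4: "assoc_cond S \<longleftrightarrow>
         (\<forall>x y. succ_fun T S (x - succ_fun T S y) + succ_fun T S y
                = succ_fun T S (succ_fun T S (x - y) + y))"
proof
  assume A: "assoc_cond S"
  have S0: "S 0 = 0" and S1: "S 1 = 0" using assoc_zero[OF A] by auto
  show "\<forall>x y. succ_fun T S (x - succ_fun T S y) + succ_fun T S y
                = succ_fun T S (succ_fun T S (x - y) + y)"
  proof (intro allI antisym)
    fix x y
    obtain p where p: "p\<in>{0..1}" "succ_fun T S (x-y) = p*(x-y) - T * S p" using lam_att by blast
    obtain q where q: "q\<in>{0..1}" "succ_fun T S (succ_fun T S (x-y) + y) = q*(succ_fun T S (x-y) + y) - T * S q"
      using lam_att by blast
    have "succ_fun T S (succ_fun T S (x-y) + y) = q*(succ_fun T S (x-y) + y) - T * S q" by (rule q(2))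
    also have "\<dots> = q*(p*(x-y) - T * S p + y) - T * S q" by (simp only: p(2))
    also have "\<dots> = (q*p)*x + (q*(1-p))*y - T*(S q + q*S p)" by (simp add: algebra_simps)
    finally have P1: "succ_fun T S (succ_fun T S (x-y) + y) = (q*p)*x + (q*(1-p))*y - T*(S q + q*S p)" .
    show "succ_fun T S (x - succ_fun T S y) + succ_fun T S y \<le> succ_fun T S (succ_fun T S (x - y) + y)"
    proof (cases "q = 0")
      case True
      then show ?thesis using up2[of 0 0 x y] P1 S0 by simp
    next
      case qn0: False
      show ?thesis
      proof (cases "q*p = 1")
        case True
        then have "q = 1" "p = 1" using p q
          by (metis atLeastAtMost_iff less_eq_real_def mult.commute mult_le_one mult_right_le_one_le not_less)+
        then show ?thesis using up2[of 1 0 x y] P1 S1 by simp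
      next
        case False
        have qp1: "q*p < 1" using False p q by (metis atLeastAtMost_iff less_eq_real_def mult_le_one)
        define a where "a = q*p"
        define r where "r = (q*(1-p))/(1-a)"
        have a01: "a \<in> {0..1}" using p q by (auto simp: a_def mult_le_one)
        have "q*(1-p) \<le> 1 - a" using q by (simp add: a_def algebra_simps)
        then have r01: "r \<in> {0..1}" using p q qp1 by (auto simp: r_def a_def divide_simps)
        have ar: "(1-a)*r = q*(1-p)" using qp1 by (simp add: r_def a_def)
        have "S a + (1 - a) * S ((q*(1-p)) / (1 - a)) = S (a + q*(1-p)) + (a + q*(1-p)) * S (a / (a + q*(1-p)))"
        proof (rule assocD[OF A])
          show "a \<ge> 0" using a01 by auto
          show "q*(1-p) \<ge> 0" using p q by auto
          show "a + q*(1-p) \<le> 1" using q by (simp add: a_def algebra_simps)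
          show "a < 1" using qp1 by (simp add: a_def)
          show "a + q*(1-p) > 0" using q qn0 by (simp add: a_def algebra_simps)
        qed
        moreover have "a + q*(1-p) = q" by (simp add: a_def algebra_simps)
        moreover have "a / q = p" using qn0 by (simp add: a_def)
        ultimately have E: "S a + (1-a) * S r = S q + q * S p" by (simp add: r_def)
        show ?thesis using up2[OF a01 r01, of x y] P1 E ar by (simp add: a_def)
      qed
    qed
  next
    fix x y
    obtain r where r: "r\<in>{0..1}" "succ_fun T S y = r*y - T * S r" using lam_att by blast
    obtain a where a: "a\<in>{0..1}" "succ_fun T S (x - succ_fun T S y) = a*(x - succ_fun T S y) - T * S a"
      using lam_att by blast
    have "succ_fun T S (x - succ_fun T S y) + succ_fun T S y = a*(x - succ_fun T S y) - T * S a + succ_fun T S y"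
      by (simp only: a(2))
    also have "\<dots> = a*x + (1-a)* succ_fun T S y - T * S a" by (simp add: algebra_simps)
    also have "\<dots> = a*x + (1-a)*(r*y - T * S r) - T * S a" by (simp only: r(2))
    also have "\<dots> = a*x + ((1-a)*r)*y - T*(S a + (1-a)*S r)" by (simp add: algebra_simps)
    finally have P2: "succ_fun T S (x - succ_fun T S y) + succ_fun T S y = a*x + ((1-a)*r)*y - T*(S a + (1-a)*S r)" .
    show "succ_fun T S (succ_fun T S (x - y) + y) \<le> succ_fun T S (x - succ_fun T S y) + succ_fun T S y"
    proof (cases "a = 1")
      case True
      then show ?thesis using up1[of 1 1 x y] P2 S1 by simp
    next
      case a1: False
      then have a1': "a < 1" using a by auto
      show ?thesis
      proof (cases "a + (1-a)*r = 0")
        case True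
        have "(1-a)*r \<ge> 0" using a r by auto
        then have a0: "a = 0" using True a by auto
        then have "r = 0" using True by simp
        note a0 this
        then show ?thesis using up1[of 0 0 x y] P2 S0 by simp
      next
        case False
        define q where "q = a + (1-a)*r"
        define p where "p = a / q"
        have q0: "q > 0" using False a r unfolding q_def by (smt (verit) atLeastAtMost_iff mult_nonneg_nonneg)
        have "(1-a)*r \<le> (1-a)*1" using a r by (intro mult_left_mono) auto
        then have q01: "q \<in> {0..1}" using q0 by (auto simp: q_def)
        have p01: "p \<in> {0..1}" using q0 a r unfolding p_def q_def
          by (auto simp: divide_simps mult_nonneg_nonneg)
        have qp1: "q*p = a" using q0 by (simp add: p_def)
        have qp: "q*p = a" "q*(1-p) = (1-a)*r" using qp1 by (auto simp: q_def algebra_simps)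
        have "S a + (1 - a) * S (((1-a)*r) / (1 - a)) = S (a + (1-a)*r) + (a + (1-a)*r) * S (a / (a + (1-a)*r))"
        proof (rule assocD[OF A])
          show "a \<ge> 0" using a by auto
          show "(1-a)*r \<ge> 0" using a r by auto
          show "a + (1-a)*r \<le> 1" using q01 by (simp add: q_def)
          show "a < 1" using a1' .
          show "a + (1-a)*r > 0" using q0 by (simp add: q_def)
        qed
        then have E: "S a + (1-a) * S r = S q + q * S p" using a1' by (simp add: p_def q_def)
        show ?thesis using up1[OF q01 p01, of x y] P2 E qp by simp
      qed
    qed
  qed
next
  assume H: "\<forall>x y. succ_fun T S (x - succ_fun T S y) + succ_fun T S y
                = succ_fun T S (succ_fun T S (x - y) + y)"
  show "assoc_cond S"
    unfolding assoc_cond_def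
  proof (intro allI impI)
    fix p1 p2 :: real
    assume c: "p1 \<ge> 0 \<and> p2 \<ge> 0 \<and> p1 + p2 \<le> 1 \<and> p1 < 1 \<and> p1 + p2 > 0"
    define q where "q = p1 + p2"
    define p where "p = p1 / q"
    define r where "r = p2 / (1 - p1)"
    have q01: "q \<in> {0..1}" and q0: "q > 0" using c by (auto simp: q_def)
    have p01: "p \<in> {0..1}" using c q0 by (auto simp: p_def q_def divide_simps)
    have a01: "p1 \<in> {0..1}" using c by auto
    have r01: "r \<in> {0..1}" using c by (auto simp: r_def divide_simps)
    have qp1: "q*p = p1" using q0 by (simp add: p_def)
    have qp: "q*p = p1" "q*(1-p) = p2" using qp1 by (auto simp: q_def algebra_simps)
    have ar: "(1-p1)*r = p2" using c by (auto simp: r_def)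
    define C1 where "C1 = T*(S q + q*S p)"
    define C2 where "C2 = T*(S p1 + (1-p1)*S r)"
    have U1: "succ_fun T S (succ_fun T S (x - y) + y) \<le> p1*x + p2*y - C1" for x y
      using up1[OF q01 p01, of x y] qp by (simp add: C1_def)
    have U2: "succ_fun T S (x - succ_fun T S y) + succ_fun T S y \<le> p1*x + p2*y - C2" for x y
      using up2[OF a01 r01, of x y] ar by (simp add: C2_def)
    have "C1 \<le> C2"
    proof (rule eps_le)
      fix \<epsilon> :: real assume e: "\<epsilon> > 0"
      obtain x y where "succ_fun T S (x - succ_fun T S y) + succ_fun T S y > p1*x + ((1-p1)*r)*y - C2 - \<epsilon>"
        using ap2[OF a01 r01 e] unfolding C2_def by blast
      then have "p1*x + p2*y - C2 - \<epsilon> < p1*x + p2*y - C1" using U1[of x y] H ar by auto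
      then show "C1 - \<epsilon> < C2" by simp
    qed
    moreover have "C2 \<le> C1"
    proof (rule eps_le)
      fix \<epsilon> :: real assume e: "\<epsilon> > 0"
      obtain x y where "succ_fun T S (succ_fun T S (x - y) + y) > (q*p)*x + (q*(1-p))*y - C1 - \<epsilon>"
        using ap1[OF q01 p01 e] unfolding C1_def by blast
      then have "p1*x + p2*y - C1 - \<epsilon> < p1*x + p2*y - C2" using U2[of x y] H qp by auto
      then show "C2 - \<epsilon> < C1" by simp
    qed
    ultimately have "C1 = C2" by simp
    then have "S q + q*S p = S p1 + (1-p1)*S r" using T_pos by (simp add: C1_def C2_def)
    then show "S p1 + (1 - p1) * S (p2 / (1 - p1)) = S (p1 + p2) + (p1 + p2) * S (p1 / (p1 + p2))"
      by (simp add: q_def p_def r_def)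
  qed
qed

end

theorem proposition9p1:
  fixes T :: real and S :: "real \<Rightarrow> real"
  assumes T_pos: "T > 0"
    and cont: "continuous_on {0..1} S"
    and conc: "concave_on {0..1} S"
  shows "(\<forall>x y. thermo_add T S x y = succ_fun T S (x - y) + y)
    \<and> ((\<forall>p\<in>{0..1}. S p = S (1 - p)) \<longleftrightarrow> (\<forall>x. succ_fun T S x - succ_fun T S (- x) = x))
    \<and> (S 0 = 0 \<longleftrightarrow> (\<forall>x. succ_fun T S x \<le> 0) \<and> (succ_fun T S \<longlongrightarrow> 0) at_top)
    \<and> (S 1 = 0 \<longleftrightarrow> (\<forall>x. succ_fun T S x \<le> x) \<and> ((\<lambda>x. succ_fun T S x - x) \<longlongrightarrow> 0) at_bot)
    \<and> (assoc_cond S \<longleftrightarrow>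
         (\<forall>x y. succ_fun T S (x - succ_fun T S y) + succ_fun T S y
                = succ_fun T S (succ_fun T S (x - y) + y)))
    \<and> (assoc_cond S \<longrightarrow>
         (\<forall>x y z. thermo_add T S (thermo_add T S x y) z = thermo_add T S x (thermo_add T S y z)))"
proof -
  note th = thermo[OF T_pos cont conc]
  have P5: "thermo_add T S (thermo_add T S x y) z = thermo_add T S x (thermo_add T S y z)"
    if A: "assoc_cond S" for x y z
  proof -
    have H: "succ_fun T S (X - succ_fun T S Y) + succ_fun T S Y = succ_fun T S (succ_fun T S (X - Y) + Y)" for X Y
      using part4[OF T_pos cont conc] A by blast
    have "thermo_add T S (thermo_add T S x y) z = succ_fun T S (succ_fun T S ((x - z) - (y - z)) + (y - z)) + z"
      by (simp add: th algebra_simps)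
    also have "\<dots> = succ_fun T S ((x - z) - succ_fun T S (y - z)) + succ_fun T S (y - z) + z"
      using H[of "x - z" "y - z"] by simp
    also have "\<dots> = thermo_add T S x (thermo_add T S y z)"
      by (simp add: th algebra_simps)
    finally show ?thesis .
  qed
  show ?thesis
    using th part1[OF T_pos cont conc] part2[OF T_pos cont conc] part3[OF T_pos cont conc]
      part4[OF T_pos cont conc] P5 by blast
qed

end
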